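(* Let $f\colon G\to G$ be a graph map with mapping torus $X$, and let $H$, $z$, $\widetilde P$ be as in the context. Let $\mathcal V_1,\dots,\mathcal V_m$ be the connected components of the union $\mathcal V$ of the vertical edges of $X$, and let $c_i\in H$ be the homology class of the unique embedded directed cycle in $\mathcal V_i$. Then $\det(I-z^{-1}\widetilde P)\doteq\prod_{i=1}^m(1-c_i)$.
   Context: $G$ is a finite connected graph; a graph map sends vertices to vertices and edges to nondegenerate edge paths. $X=G\times[0,1]/(x,1)\sim(f(x),0)$ is the mapping torus; its vertical edges are the arcs $\{v\}\times[0,1]$ for vertices $v$ of $G$, oriented from $v$ to $f(v)$; each component of their union consists of one directed cycle (a periodic orbit of $f$ on vertices) with trees attached. $H=H_1(X;\mathbb{Z})/\mathrm{torsion}$, $\widetilde X\to X$ is the universal free abelian cover with deck group $H$, $\widetilde G_0$ is a fixed component of the preimage of $G$ with stabilizer $K$, $\widetilde f\colon\widetilde G_0\to\widetilde G_0$ is a fixed lift of $f$, and $z\in H$ is the deck transformation such that for each $\widetilde x\in\widetilde G_0$ over $x$, $\widetilde f(\widetilde x)$ is the first point of $\widetilde G_0$ on the lift starting at $z\widetilde x$ of the arc $\{x\}\times[0,1]$. With a chosen lift of each vertex, $C_0(\widetilde G_0)\cong\mathbb{Z}[K]^V$ and $\widetilde P$ is the $\mathbb{Z}[K]$-matrix of $\widetilde f$ on $0$-chains. $\doteq$ means equality in $\mathbb{Z}[H]$ up to a unit $\pm h$, $h\in H$. *)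

theory Defs
  imports "HOL-Analysis.Determinants" "HOL-Library.Poly_Mapping" "HOL-Library.Function_Algebras"
begin

section \<open>Finite graphs (vertex type 'v, all of UNIV; edge set Es) and edge paths\<close>

text \<open>An oriented edge is a pair (e, b): b = True traverses e from src e to tgt e,
  b = False traverses it backwards.\<close>

definition osrc :: "('e \<Rightarrow> 'v) \<Rightarrow> ('e \<Rightarrow> 'v) \<Rightarrow> 'e \<times> bool \<Rightarrow> 'v" where
  "osrc src tgt x = (if snd x then src (fst x) else tgt (fst x))"

definition otgt :: "('e \<Rightarrow> 'v) \<Rightarrow> ('e \<Rightarrow> 'v) \<Rightarrow> 'e \<times> bool \<Rightarrow> 'v" where
  "otgt src tgt x = (if snd x then tgt (fst x) else src (fst x))"

fun is_path :: "'e set \<Rightarrow> ('e \<Rightarrow> 'v) \<Rightarrow> ('e \<Rightarrow> 'v) \<Rightarrow> 'v \<Rightarrow> ('e \<times> bool) list \<Rightarrow> 'v \<Rightarrow> bool" where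
  "is_path Es src tgt a [] b \<longleftrightarrow> a = b"
| "is_path Es src tgt a (x # xs) b \<longleftrightarrow>
     fst x \<in> Es \<and> osrc src tgt x = a \<and> is_path Es src tgt (otgt src tgt x) xs b"

definition graph_connected :: "'e set \<Rightarrow> ('e \<Rightarrow> 'v) \<Rightarrow> ('e \<Rightarrow> 'v) \<Rightarrow> bool" where
  "graph_connected Es src tgt \<longleftrightarrow> (\<forall>a b. \<exists>p. is_path Es src tgt a p b)"

definition graph_map :: "'e set \<Rightarrow> ('e \<Rightarrow> 'v) \<Rightarrow> ('e \<Rightarrow> 'v) \<Rightarrow> ('v \<Rightarrow> 'v)
    \<Rightarrow> ('e \<Rightarrow> ('e \<times> bool) list) \<Rightarrow> bool" where
  "graph_map Es src tgt fv fe \<longleftrightarrow>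
     (\<forall>e\<in>Es. fe e \<noteq> [] \<and> is_path Es src tgt (fv (src e)) (fe e) (fv (tgt e)))"

text \<open>1-cells of X: horizontal edges Inl e (e in Es) and vertical edges Inr v
  (the arc v x [0,1], from v to fv v). 2-cells: one for each edge e in Es.
  Integral 1-chains are functions ('e + 'v) => int vanishing off the 1-cells.\<close>

type_synonym ('e, 'v) chain = "'e + 'v \<Rightarrow> int"

definition chain_ok :: "'e set \<Rightarrow> ('e, 'v) chain \<Rightarrow> bool" where
  "chain_ok Es c \<longleftrightarrow> (\<forall>e. e \<notin> Es \<longrightarrow> c (Inl e) = 0)"

definition ochain :: "'e \<times> bool \<Rightarrow> ('e, 'v) chain" where
  "ochain x = (\<lambda>y. if y = Inl (fst x) then (if snd x then 1 else -1) else 0)"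

definition pchain :: "('e \<times> bool) list \<Rightarrow> ('e, 'v) chain" where
  "pchain p = sum_list (map ochain p)"

definition vchain :: "'v \<Rightarrow> ('e, 'v) chain" where
  "vchain v = (\<lambda>y. if y = Inr v then 1 else 0)"

definition bd1 :: "'e set \<Rightarrow> ('e \<Rightarrow> 'v) \<Rightarrow> ('e \<Rightarrow> 'v) \<Rightarrow> ('v::finite \<Rightarrow> 'v)
    \<Rightarrow> ('e, 'v) chain \<Rightarrow> 'v \<Rightarrow> int" where
  "bd1 Es src tgt fv c w =
     (\<Sum>e\<in>Es. c (Inl e) * (of_bool (tgt e = w) - of_bool (src e = w)))
   + (\<Sum>v\<in>UNIV. c (Inr v) * (of_bool (fv v = w) - of_bool (v = w)))"

definition cycles1 :: "'e set \<Rightarrow> ('e \<Rightarrow> 'v) \<Rightarrow> ('e \<Rightarrow> 'v) \<Rightarrow> ('v::finite \<Rightarrow> 'v)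
    \<Rightarrow> ('e, 'v) chain set" where
  "cycles1 Es src tgt fv = {c. chain_ok Es c \<and> bd1 Es src tgt fv c = (\<lambda>_. 0)}"

text \<open>Boundary of the 2-cell e x [0,1]: e, then the vertical edge at tgt e,
  then f(e) backwards, then the vertical edge at src e backwards.\<close>
definition cell2 :: "('e \<Rightarrow> 'v) \<Rightarrow> ('e \<Rightarrow> 'v) \<Rightarrow> ('e \<Rightarrow> ('e \<times> bool) list) \<Rightarrow> 'e
    \<Rightarrow> ('e, 'v) chain" where
  "cell2 src tgt fe e = ochain (e, True) + vchain (tgt e) - pchain (fe e) - vchain (src e)"

definition bdries2 :: "'e set \<Rightarrow> ('e \<Rightarrow> 'v) \<Rightarrow> ('e \<Rightarrow> 'v) \<Rightarrow> ('e \<Rightarrow> ('e \<times> bool) list)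
    \<Rightarrow> ('e, 'v) chain set" where
  "bdries2 Es src tgt fe =
     {c. \<exists>n :: 'e \<Rightarrow> int. c = (\<Sum>e\<in>Es. (\<lambda>y. n e * cell2 src tgt fe e y))}"

text \<open>Cycles that are zero in H_1(X;Z)/torsion.\<close>
definition sat_bdries :: "'e set \<Rightarrow> ('e \<Rightarrow> 'v) \<Rightarrow> ('e \<Rightarrow> 'v) \<Rightarrow> ('e \<Rightarrow> ('e \<times> bool) list)
    \<Rightarrow> ('e, 'v) chain set" where
  "sat_bdries Es src tgt fe =
     {c. \<exists>n :: int. n \<noteq> 0 \<and> (\<lambda>y. n * c y) \<in> bdries2 Es src tgt fe}"

text \<open>q : Z_1(X) -> 'h exhibits 'h as H = H_1(X;Z)/torsion:
  q is an additive surjection on 1-cycles whose kernel is the torsion-saturation of the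
  boundaries.\<close>
definition is_H_quotient :: "'e set \<Rightarrow> ('e \<Rightarrow> 'v) \<Rightarrow> ('e \<Rightarrow> 'v) \<Rightarrow> ('v::finite \<Rightarrow> 'v)
    \<Rightarrow> ('e \<Rightarrow> ('e \<times> bool) list) \<Rightarrow> (('e, 'v) chain \<Rightarrow> 'h::ab_group_add) \<Rightarrow> bool" where
  "is_H_quotient Es src tgt fv fe q \<longleftrightarrow>
     (\<forall>c\<in>cycles1 Es src tgt fv. \<forall>d\<in>cycles1 Es src tgt fv. q (c + d) = q c + q d)
   \<and> q ` cycles1 Es src tgt fv = UNIV
   \<and> (\<forall>c\<in>cycles1 Es src tgt fv. q c = 0 \<longleftrightarrow> c \<in> sat_bdries Es src tgt fe)"

section \<open>Vertices of the universal free abelian cover (relative to a base vertex v0)\<close>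

text \<open>A vertex of the cover over v is represented by (v, c) with c a 1-chain with
  boundary v - v0 (i.e. the abelianised class of a path from v0 to v); two representatives
  over the same vertex give the same point iff their difference (a 1-cycle) maps to 0 in H.\<close>

definition valid_lift :: "'e set \<Rightarrow> ('e \<Rightarrow> 'v) \<Rightarrow> ('e \<Rightarrow> 'v) \<Rightarrow> ('v::finite \<Rightarrow> 'v) \<Rightarrow> 'v
    \<Rightarrow> 'v \<times> ('e, 'v) chain \<Rightarrow> bool" where
  "valid_lift Es src tgt fv v0 x \<longleftrightarrow>
     chain_ok Es (snd x) \<and>
     bd1 Es src tgt fv (snd x) = (\<lambda>w. of_bool (w = fst x) - of_bool (w = v0))"

definition lift_eq :: "(('e, 'v) chain \<Rightarrow> 'h::ab_group_add)
    \<Rightarrow> 'v \<times> ('e, 'v) chain \<Rightarrow> 'v \<times> ('e, 'v) chain \<Rightarrow> bool" where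
  "lift_eq q x y \<longleftrightarrow> fst x = fst y \<and> q (snd x - snd y) = 0"

text \<open>deck_rel q h x y: y = h . x (action of the deck transformation h).\<close>
definition deck_rel :: "(('e, 'v) chain \<Rightarrow> 'h::ab_group_add) \<Rightarrow> 'h
    \<Rightarrow> 'v \<times> ('e, 'v) chain \<Rightarrow> 'v \<times> ('e, 'v) chain \<Rightarrow> bool" where
  "deck_rel q h x y \<longleftrightarrow> fst x = fst y \<and> q (snd y - snd x) = h"

text \<open>Vertices of the component of the preimage of G containing the lifted vertex b:
  those reached from b by lifting an edge path of G.\<close>
definition in_comp :: "'e set \<Rightarrow> ('e \<Rightarrow> 'v) \<Rightarrow> ('e \<Rightarrow> 'v) \<Rightarrow> (('e, 'v) chain \<Rightarrow> 'h::ab_group_add)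
    \<Rightarrow> 'v \<times> ('e, 'v) chain \<Rightarrow> 'v \<times> ('e, 'v) chain \<Rightarrow> bool" where
  "in_comp Es src tgt q b x \<longleftrightarrow>
     (\<exists>p. is_path Es src tgt (fst b) p (fst x) \<and> lift_eq q (fst x, snd b + pchain p) x)"

text \<open>Endpoint of the lift, starting at x, of the vertical arc over fst x.\<close>
definition vert_end :: "('v \<Rightarrow> 'v) \<Rightarrow> 'v \<times> ('e, 'v) chain \<Rightarrow> 'v \<times> ('e, 'v) chain" where
  "vert_end fv x = (fv (fst x), snd x + vchain (fst x))"

text \<open>The lift of f determined by the deck transformation z (on vertices):
  ftilde(x) = endpoint of the lift starting at z . x of the vertical arc.\<close>
definition ftilde :: "'e set \<Rightarrow> ('e \<Rightarrow> 'v) \<Rightarrow> ('e \<Rightarrow> 'v) \<Rightarrow> ('v::finite \<Rightarrow> 'v)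
    \<Rightarrow> (('e, 'v) chain \<Rightarrow> 'h::ab_group_add) \<Rightarrow> 'h
    \<Rightarrow> 'v \<times> ('e, 'v) chain \<Rightarrow> 'v \<times> ('e, 'v) chain" where
  "ftilde Es src tgt fv q z x =
     vert_end fv (fst x, snd x + (SOME g. g \<in> cycles1 Es src tgt fv \<and> q g = z))"

text \<open>The Z[K]-matrix of ftilde on 0-chains w.r.t. the chosen lifts (v, L v):
  column j has the entry k at row fv j, where ftilde(lift j) = k . lift (fv j).\<close>
definition Pmat :: "'e set \<Rightarrow> ('e \<Rightarrow> 'v) \<Rightarrow> ('e \<Rightarrow> 'v) \<Rightarrow> ('v::finite \<Rightarrow> 'v)
    \<Rightarrow> (('e, 'v) chain \<Rightarrow> 'h::ab_group_add) \<Rightarrow> 'h \<Rightarrow> ('v \<Rightarrow> ('e, 'v) chain)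
    \<Rightarrow> ('h \<Rightarrow>\<^sub>0 int) ^ 'v ^ 'v" where
  "Pmat Es src tgt fv q z L =
     (\<chi> i j. if i = fv j
             then Poly_Mapping.single
                    (THE k. deck_rel q k (fv j, L (fv j)) (ftilde Es src tgt fv q z (j, L j))) 1
             else 0)"

definition vert_rel :: "('v \<Rightarrow> 'v) \<Rightarrow> ('v \<times> 'v) set" where
  "vert_rel fv = ({(v, fv v) | v. True} \<union> {(fv v, v) | v. True})\<^sup>*"

definition vert_components :: "('v \<Rightarrow> 'v) \<Rightarrow> 'v set set" where
  "vert_components fv = UNIV // vert_rel fv"

text \<open>Vertices on the directed cycle of a component (periodic vertices); the cycle consists
  of the vertical edges at these vertices.\<close>
definition cycle_verts :: "('v \<Rightarrow> 'v) \<Rightarrow> 'v set \<Rightarrow> 'v set" where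
  "cycle_verts fv C = {u \<in> C. \<exists>n>0. (fv ^^ n) u = u}"

definition cycle_class :: "('v \<Rightarrow> 'v) \<Rightarrow> (('e, 'v) chain \<Rightarrow> 'h) \<Rightarrow> 'v set \<Rightarrow> 'h" where
  "cycle_class fv q C = q (\<Sum>u\<in>cycle_verts fv C. vchain u)"

definition assoc_unit :: "('h::ab_group_add \<Rightarrow>\<^sub>0 int) \<Rightarrow> ('h \<Rightarrow>\<^sub>0 int) \<Rightarrow> bool" where
  "assoc_unit a b \<longleftrightarrow> (\<exists>h \<epsilon>. (\<epsilon> = 1 \<or> \<epsilon> = -1) \<and> a = Poly_Mapping.single h \<epsilon> * b)"

end

theory Submission
  imports Defs
begin

definition Xm :: "('v::finite \<Rightarrow> 'v) \<Rightarrow> ('v \<Rightarrow> 'a::comm_ring_1) \<Rightarrow> 'a^'v^'v" where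
 "Xm f a = (\<chi> j i. (if j = i then 1 else 0) - (if i = f j then a j else 0))"

lemma Xm_mult:
  fixes b c :: "'v::finite \<Rightarrow> 'a::comm_ring_1"
  assumes "\<forall>j. b j = 0 \<or> c j = 0" "\<forall>j. c j \<noteq> 0 \<longrightarrow> b (f j) = 0"
  shows "Xm f (\<lambda>j. b j + c j) = Xm f c ** Xm f b"
proof -
  have "(Xm f c ** Xm f b) $ j $ i = Xm f (\<lambda>j. b j + c j) $ j $ i" for j i
  proof -
    have "(Xm f c ** Xm f b) $ j $ i =
      (\<Sum>l\<in>UNIV. ((if j = l then 1 else 0) - (if l = f j then c j else 0)) *
                  ((if l = i then 1 else 0) - (if i = f l then b l else 0)))"
      by (simp add: matrix_matrix_mult_def Xm_def)
    also have "\<dots> = (\<Sum>l\<in>UNIV. (if l = j then ((if l = i then 1 else 0) - (if i = f l then b l else 0)) else 0))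
       - (\<Sum>l\<in>UNIV. (if l = f j then c j * ((if l = i then 1 else 0) - (if i = f l then b l else 0)) else 0))"
      unfolding sum_subtractf[symmetric]
      by (rule sum.cong) (auto simp: left_diff_distrib)
    also have "\<dots> = ((if j = i then 1 else 0) - (if i = f j then b j else 0))
        - c j * ((if f j = i then 1 else 0) - (if i = f (f j) then b (f j) else 0))"
      by (simp add: sum.delta)
    also have "\<dots> = Xm f (\<lambda>j. b j + c j) $ j $ i"
      using assms by (cases "c j = 0") (auto simp: Xm_def algebra_simps)
    finally show ?thesis .
  qed
  then show ?thesis by (simp add: vec_eq_iff)
qed

lemma det_Xm_single:
  fixes b :: "'v::finite \<Rightarrow> 'a::comm_ring_1"
  assumes "f j \<noteq> j" "\<forall>l. l \<noteq> j \<longrightarrow> b l = 0"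
  shows "det (Xm f b) = 1"
proof -
  have "Xm f b = (\<chi> k. if k = j then row j (mat 1) + (- b j) *s row (f j) (mat 1) else row k (mat 1))"
    proof -
    have "Xm f b $ k $ i = (\<chi> k. if k = j then row j (mat 1) + (- b j) *s row (f j) (mat 1) else row k (mat 1)) $ k $ i" for k i
      using assms by (cases "k = j") (simp_all add: Xm_def row_def mat_def)
    then show ?thesis by (simp add: vec_eq_iff)
  qed
  then have "det (Xm f b) = det (mat 1 :: 'a^'v^'v)"
    using det_row_operation[where i=j and j="f j" and c="- b j" and A="mat 1 :: 'a^'v^'v"] assms(1) by simp
  then show ?thesis by simp
qed

lemma Xm_zero: "Xm f (\<lambda>_. 0) = mat 1"
  by (simp add: vec_eq_iff Xm_def mat_def)

lemma det_Xm_acyclic: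
  fixes b :: "'v::finite \<Rightarrow> 'a::comm_ring_1"
  assumes "\<forall>T. T \<noteq> {} \<longrightarrow> T \<subseteq> {j. b j \<noteq> 0} \<longrightarrow> (\<exists>j\<in>T. \<forall>l\<in>T. f l \<noteq> j)"
  shows "det (Xm f b) = 1"
  using assms
proof (induction "card {j. b j \<noteq> 0}" arbitrary: b rule: less_induct)
  case less
  show ?case
  proof (cases "{j. b j \<noteq> 0} = {}")
    case True
    then have "b = (\<lambda>_. 0)" by auto
    then show ?thesis by (simp add: Xm_zero)
  next
    case False
    then obtain j where j: "b j \<noteq> 0" "\<forall>l\<in>{j. b j \<noteq> 0}. f l \<noteq> j"
      using less.prems[rule_format, of "{j. b j \<noteq> 0}"] False by auto
    define bj where "bj = (\<lambda>l. if l = j then b l else 0)"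
    define b' where "b' = b(j := 0)"
    have bsum: "b = (\<lambda>l. bj l + b' l)" by (auto simp: bj_def b'_def fun_eq_iff)
    have "Xm f (\<lambda>l. bj l + b' l) = Xm f b' ** Xm f bj"
      by (rule Xm_mult) (use j in \<open>auto simp: bj_def b'_def\<close>)
    then have "Xm f b = Xm f b' ** Xm f bj" using bsum by simp
    then have "det (Xm f b) = det (Xm f b') * det (Xm f bj)" by (simp add: det_mul)
    moreover have "det (Xm f bj) = 1"
      by (rule det_Xm_single[of f j]) (use j in \<open>auto simp: bj_def\<close>)
    moreover have "det (Xm f b') = 1"
    proof (rule less.hyps)
      have "{l. b' l \<noteq> 0} \<subset> {l. b l \<noteq> 0}" using j by (auto simp: b'_def)
      then show "card {l. b' l \<noteq> 0} < card {j. b j \<noteq> 0}" by (simp add: psubset_card_mono)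
      show "\<forall>T. T \<noteq> {} \<longrightarrow> T \<subseteq> {j. b' j \<noteq> 0} \<longrightarrow> (\<exists>j\<in>T. \<forall>l\<in>T. f l \<noteq> j)"
        using less.prems by (auto simp: b'_def)
    qed
    ultimately show ?thesis by simp
  qed
qed

lemma det_Xm_contract:
  fixes a :: "'v::finite \<Rightarrow> 'a::comm_ring_1"
  assumes fj: "f j = k" and jk: "j \<noteq> k" and fk: "f k \<noteq> k"
    and pre: "\<forall>l. l \<noteq> j \<and> f l = k \<longrightarrow> a l = 0"
  shows "det (Xm f a) = det (Xm (f(j := f k)) (a(j := a j * a k, k := 0)))"
proof -
  define X where "X = Xm f a"
  define Y where "Y = (\<chi> r. if r = j then row j X + a j *s row k X else row r X)"
  have dY: "det Y = det X" unfolding Y_def by (rule det_row_operation[OF jk])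
  define m where "m = f k"
  have mk: "m \<noteq> k" using fk m_def by simp
  define Z where "Z = (\<chi> r. if r = m then row m (transpose Y) + a k *s row k (transpose Y) else row r (transpose Y))"
  have dZ: "det Z = det (transpose Y)" unfolding Z_def by (rule det_row_operation[OF mk])
  have Yent: "Y $ s $ t = (if s = j then X $ j $ t + a j * X $ k $ t else X $ s $ t)" for s t
    by (simp add: Y_def row_def)
  have Xent: "X $ s $ t = (if s = t then 1 else 0) - (if t = f s then a s else 0)" for s t
    by (simp add: X_def Xm_def)
  have "Z $ r $ s = transpose (Xm (f(j := f k)) (a(j := a j * a k, k := 0))) $ r $ s" for r s
  proof -
    have Zent: "Z $ r $ s = (if r = m then Y $ s $ m + a k * Y $ s $ k else Y $ s $ r)"
      by (simp add: Z_def row_def transpose_def)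
    show ?thesis
      unfolding Zent Yent Xent using fj jk fk pre mk
      by (auto simp: transpose_def Xm_def m_def algebra_simps)
  qed
  then have "Z = transpose (Xm (f(j := f k)) (a(j := a j * a k, k := 0)))"
    by (simp add: vec_eq_iff)
  then show ?thesis using dY dZ by (simp add: X_def)
qed

lemma det_Xm_cycle:
  fixes a :: "'v::finite \<Rightarrow> 'a::comm_ring_1"
  assumes "distinct us" "us \<noteq> []" "\<forall>i. Suc i < length us \<longrightarrow> f (us!i) = us!(Suc i)"
    "f (last us) = hd us" "\<forall>l. l \<notin> set us \<longrightarrow> a l = 0"
  shows "det (Xm f a) = 1 - (\<Prod>u\<in>set us. a u)"
  using assms
proof (induction "length us" arbitrary: us f a rule: less_induct)
  case less
  show ?case
  proof (cases us)
    case Nil then show ?thesis using less.prems by simp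
  next
    case (Cons j us1)
    show ?thesis
    proof (cases us1)
      case Nil
      have fj: "f j = j" using less.prems Cons Nil by simp
      have "det (Xm f a) = (\<Prod>i\<in>UNIV. Xm f a $ i $ i)"
      proof (rule det_diagonal)
        fix i i' :: 'v assume "i \<noteq> i'"
        then show "Xm f a $ i $ i' = 0"
          using less.prems Cons Nil fj by (cases "i = j") (auto simp: Xm_def)
      qed
      also have "\<dots> = (\<Prod>i\<in>UNIV. if i = j then 1 - a j else 1)"
        by (rule prod.cong) (use less.prems Cons Nil fj in \<open>auto simp: Xm_def\<close>)
      also have "\<dots> = 1 - a j" by (simp add: prod.delta)
      finally show ?thesis using Cons Nil by simp
    next
      case (Cons k rest)
      note us = \<open>us = j # us1\<close> Cons
      have dist: "distinct (j # k # rest)" using less.prems us by simp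
      have fj: "f j = k" using less.prems(3)[rule_format, of 0] us by simp
      have jk: "j \<noteq> k" using dist by auto
      have fk: "f k = (if rest = [] then j else hd rest)"
      proof (cases rest)
        case Nil then show ?thesis using less.prems(4) us by simp
      next
        case (Cons x xs) then show ?thesis using less.prems(3)[rule_format, of 1] us by simp
      qed
      have fkk: "f k \<noteq> k" using fk dist by (cases rest) auto
      have pre: "\<forall>l. l \<noteq> j \<and> f l = k \<longrightarrow> a l = 0"
      proof (intro allI impI)
        fix l assume l: "l \<noteq> j \<and> f l = k"
        show "a l = 0"
        proof (rule ccontr)
          assume "a l \<noteq> 0"
          then have "l \<in> set us" using less.prems(5) by blast
          then obtain i where i: "i < length us" "us ! i = l" by (auto simp: in_set_conv_nth)
          show False
          proof (cases "Suc i < length us")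
            case True
            then have "us ! Suc i = k" using less.prems(3) i l by auto
            then have "Suc i = 1" using dist us True nth_eq_iff_index_eq[of us "Suc i" 1]
              by (auto simp: us)
            then show False using i l us by simp
          next
            case False
            then have "i = length us - 1" using i(1) by simp
            then have "l = last us" using i(2) last_conv_nth[of us] us by simp
            then show False using less.prems(4) l jk us by simp
          qed
        qed
      qed
      define f' where "f' = f(j := f k)"
      define a' where "a' = a(j := a j * a k, k := 0)"
      have "det (Xm f a) = det (Xm f' a')"
        unfolding f'_def a'_def by (rule det_Xm_contract[OF fj jk fkk pre])
      also have "\<dots> = 1 - (\<Prod>u\<in>set (j # rest). a' u)"
      proof (rule less.hyps)
        show "length (j # rest) < length us" using us by simp
        show "distinct (j # rest)" using dist by simp
        show "j # rest \<noteq> []" by simp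
        show "\<forall>i. Suc i < length (j # rest) \<longrightarrow> f' ((j # rest) ! i) = (j # rest) ! Suc i"
        proof (intro allI impI)
          fix i assume i: "Suc i < length (j # rest)"
          show "f' ((j # rest) ! i) = (j # rest) ! Suc i"
          proof (cases i)
            case 0 then show ?thesis using i fk by (cases rest) (auto simp: f'_def)
          next
            case (Suc i')
            have ne: "rest ! i' \<noteq> j" using dist i Suc by (auto simp: nth_mem)
            have "f (us ! Suc (Suc i')) = us ! Suc (Suc (Suc i'))"
              using less.prems(3) i Suc us by auto
            then show ?thesis using ne Suc us by (simp add: f'_def)
          qed
        qed
        show "f' (last (j # rest)) = hd (j # rest)"
        proof (cases rest)
          case Nil then show ?thesis using fk by (simp add: f'_def)
        next
          case (Cons x xs)
          have "last rest \<in> set rest" using Cons by simp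
          then have "last rest \<noteq> j" using dist by auto
          moreover have "f (last rest) = j" using less.prems(4) us Cons by simp
          ultimately show ?thesis using Cons by (simp add: f'_def)
        qed
        show "\<forall>l. l \<notin> set (j # rest) \<longrightarrow> a' l = 0"
          using less.prems(5) us by (auto simp: a'_def)
      qed
      also have "(\<Prod>u\<in>set (j # rest). a' u) = (\<Prod>u\<in>set us. a u)"
      proof -
        have "(\<Prod>u\<in>set (j # rest). a' u) = a' j * (\<Prod>u\<in>set rest. a' u)"
          using dist by simp
        also have "(\<Prod>u\<in>set rest. a' u) = (\<Prod>u\<in>set rest. a u)"
          by (rule prod.cong) (use dist in \<open>auto simp: a'_def\<close>)
        also have "(\<Prod>u\<in>set us. a u) = a j * (a k * (\<Prod>u\<in>set rest. a u))"
          using dist us by simp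
        ultimately show ?thesis using jk by (simp add: a'_def mult.assoc)
      qed
      finally show ?thesis .
    qed
  qed
qed

definition isper :: "('v \<Rightarrow> 'v) \<Rightarrow> 'v \<Rightarrow> bool" where
  "isper f u \<longleftrightarrow> (\<exists>n>0. (f^^n) u = u)"

lemma funpow_pigeon:
  fixes g :: "'v::finite \<Rightarrow> 'v"
  shows "\<exists>i j. i < j \<and> (g^^i) x = (g^^j) x"
proof (rule ccontr)
  assume H: "\<not> ?thesis"
  have "inj_on (\<lambda>i. (g^^i) x) {..CARD('v)}"
  proof (rule inj_onI)
    fix i j assume "i \<in> {..CARD('v)}" "j \<in> {..CARD('v)}" "(g^^i) x = (g^^j) x"
    then show "i = j" using H by (metis linorder_neqE_nat)
  qed
  then have "card {..CARD('v)} \<le> card (UNIV :: 'v set)"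
    by (rule card_inj_on_le) auto
  then show False by simp
qed

lemma funpow_mult_fix: "(f^^m) w = w \<Longrightarrow> (f^^(m*q)) w = w"
proof (induction q)
  case 0 then show ?case by simp
next
  case (Suc q)
  have "(f^^(m * Suc q)) w = (f^^m) ((f^^(m*q)) w)"
    by (simp add: funpow_add algebra_simps)
  then show ?case using Suc by simp
qed

lemma funpow_mod:
  assumes "(f^^p) u = u"
  shows "(f^^i) u = (f^^(i mod p)) u"
proof -
  have "i = i mod p + p * (i div p)" by simp
  then have "(f^^i) u = (f^^(i mod p)) ((f^^(p * (i div p))) u)"
    by (metis funpow_add comp_apply)
  then show ?thesis using funpow_mult_fix[where f=f and m=p and w=u] assms by simp
qed

lemma isper_f: "isper f u \<Longrightarrow> isper f (f u)"
  unfolding isper_def by (metis funpow_swap1)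

lemma isper_funpow: "isper f u \<Longrightarrow> isper f ((f^^i) u)"
  by (induction i) (auto intro: isper_f)

lemma isper_inj:
  assumes "isper f x" "isper f y" "f x = f y"
  shows "x = y"
proof -
  obtain m where m: "m > 0" "(f^^m) x = x" using assms(1) by (auto simp: isper_def)
  obtain n where n: "n > 0" "(f^^n) y = y" using assms(2) by (auto simp: isper_def)
  have x: "(f^^(m*n)) x = x" using funpow_mult_fix[OF m(2)] .
  have y: "(f^^(n*m)) y = y" using funpow_mult_fix[OF n(2)] .
  obtain k where k: "m * n = Suc k" using m n by (metis gr0_conv_Suc nat_0_less_mult_iff)
  have "x = (f^^k) (f x)" using x k by (metis comp_apply funpow_Suc_right)
  also have "\<dots> = (f^^k) (f y)" using assms(3) by simp
  also have "\<dots> = y" using y k by (metis comp_apply funpow_Suc_right mult.commute)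
  finally show ?thesis .
qed

lemma equiv_vert_rel: "equiv UNIV (vert_rel f)"
proof -
  let ?R = "{(v, f v) | v. True} \<union> {(f v, v) | v. True}"
  have "sym ?R" by (auto simp: sym_def)
  then have "sym (?R\<^sup>*)" by (rule sym_rtrancl)
  then show ?thesis
    unfolding vert_rel_def equiv_def by (intro conjI) (simp_all add: refl_rtrancl trans_rtrancl)
qed

lemma vert_rel_f: "(u, f u) \<in> vert_rel f"
  unfolding vert_rel_def by (rule r_into_rtrancl) auto

lemma comp_mem:
  assumes "C \<in> vert_components f"
  obtains x where "C = vert_rel f `` {x}"
  using assms unfolding vert_components_def by (auto elim: quotientE)

lemma comp_f:
  assumes "C \<in> vert_components f" "u \<in> C" shows "f u \<in> C"
proof -
  obtain x where x: "C = vert_rel f `` {x}" using assms(1) by (rule comp_mem)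
  then have "(x, u) \<in> vert_rel f" using assms(2) by simp
  then have "(x, f u) \<in> vert_rel f"
    using vert_rel_f[of u f] unfolding vert_rel_def by (rule rtrancl_trans)
  then show ?thesis using x by simp
qed

lemma comp_rel:
  assumes "C \<in> vert_components f" "u \<in> C" "w \<in> C" shows "(u, w) \<in> vert_rel f"
proof -
  obtain x where x: "C = vert_rel f `` {x}" using assms(1) by (rule comp_mem)
  have e: "sym (vert_rel f)" "trans (vert_rel f)" using equiv_vert_rel[of f] by (auto simp: equiv_def)
  have "(x, u) \<in> vert_rel f" "(x, w) \<in> vert_rel f" using x assms by auto
  then have "(u, x) \<in> vert_rel f" using e(1) by (auto dest: symD)
  then show ?thesis using \<open>(x, w) \<in> vert_rel f\<close> e(2) by (auto dest: transD)
qed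

lemma comp_funpow: "C \<in> vert_components f \<Longrightarrow> u \<in> C \<Longrightarrow> (f^^i) u \<in> C"
  by (induction i) (auto intro: comp_f)

lemma cycle_verts_alt: "cycle_verts f C = {u \<in> C. isper f u}"
  by (simp add: cycle_verts_def isper_def)

lemma comp_self:
  assumes "C \<in> vert_components f" obtains x where "x \<in> C"
proof -
  obtain x where x: "C = vert_rel f `` {x}" using assms by (rule comp_mem)
  have "(x, x) \<in> vert_rel f" unfolding vert_rel_def by simp
  then show ?thesis using x that by blast
qed

lemma comp_cycle_nonempty:
  fixes f :: "'v::finite \<Rightarrow> 'v"
  assumes "C \<in> vert_components f"
  shows "cycle_verts f C \<noteq> {}"
proof -
  obtain x where x: "x \<in> C" using assms by (rule comp_self)
  obtain i j where ij: "i < j" "(f^^i) x = (f^^j) x" using funpow_pigeon by blast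
  define y where "y = (f^^i) x"
  have "(f^^(j - i)) y = (f^^(j - i + i)) x" unfolding y_def by (simp add: funpow_add)
  also have "j - i + i = j" using ij by simp
  finally have "(f^^(j - i)) y = y" using ij y_def by simp
  moreover have "y \<in> C" unfolding y_def using assms x by (rule comp_funpow)
  moreover have "j - i > 0" using ij by simp
  ultimately have "y \<in> cycle_verts f C" unfolding cycle_verts_def by blast
  then show ?thesis by blast
qed

lemma rel_orbit:
  assumes "(u, y) \<in> vert_rel f"
  shows "\<exists>n i. (f^^n) y = (f^^i) u"
  using assms unfolding vert_rel_def
proof (induction rule: rtrancl_induct)
  case base
  then show ?case by (intro exI[of _ 0]) simp
next
  case (step y y')
  then obtain n i where ni: "(f^^n) y = (f^^i) u" by blast
  from step(2) show ?case
  proof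
    assume "(y, y') \<in> {(v, f v) |v. True}"
    then have "y' = f y" by auto
    then have "(f^^n) y' = f ((f^^n) y)" by (simp add: funpow_swap1)
    also have "\<dots> = (f^^(Suc i)) u" using ni by simp
    finally have "(f^^n) y' = (f^^(Suc i)) u" .
    then show ?thesis by blast
  next
    assume "(y, y') \<in> {(f v, v) |v. True}"
    then have "y = f y'" by auto
    then have "(f^^(Suc n)) y' = (f^^i) u" using ni by (simp add: funpow_swap1)
    then show ?thesis by blast
  qed
qed

lemma comp_cycle_orbit:
  assumes C: "C \<in> vert_components f" and u: "u \<in> cycle_verts f C" and w: "w \<in> cycle_verts f C"
  shows "\<exists>i. w = (f^^i) u"
proof -
  have "(u, w) \<in> vert_rel f" using comp_rel[OF C] u w by (auto simp: cycle_verts_def)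
  then obtain n i where ni: "(f^^n) w = (f^^i) u" using rel_orbit[of u w f] by blast
  obtain m where m: "m > 0" "(f^^m) w = w" using w by (auto simp: cycle_verts_def)
  have mn: "m * n \<ge> n" using m by simp
  have "w = (f^^(m*n)) w" using funpow_mult_fix[where f=f and m=m and w=w] m by simp
  also have "\<dots> = (f^^(m*n - n + n)) w" using mn by simp
  also have "\<dots> = (f^^(m*n - n)) ((f^^i) u)" using ni by (simp only: funpow_add comp_apply)
  also have "\<dots> = (f^^(m*n - n + i)) u" by (simp add: funpow_add)
  finally show ?thesis by blast
qed

lemma comp_cycle_list:
  fixes f :: "'v::finite \<Rightarrow> 'v"
  assumes C: "C \<in> vert_components f"
  shows "\<exists>us. distinct us \<and> us \<noteq> [] \<and> (\<forall>i. Suc i < length us \<longrightarrow> f (us!i) = us!(Suc i))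
     \<and> f (last us) = hd us \<and> set us = cycle_verts f C"
proof -
  obtain u where u: "u \<in> cycle_verts f C" using comp_cycle_nonempty[OF C] by blast
  have ex: "\<exists>n. n > 0 \<and> (f^^n) u = u" using u by (auto simp: cycle_verts_def)
  define p where "p = (LEAST n. n > 0 \<and> (f^^n) u = u)"
  have p: "p > 0" "(f^^p) u = u" using LeastI_ex[OF ex] unfolding p_def by auto
  have pmin: "\<not> (n > 0 \<and> (f^^n) u = u)" if "n < p" for n
    using not_less_Least[of n "\<lambda>n. n > 0 \<and> (f^^n) u = u"] that unfolding p_def by blast
  define us where "us = map (\<lambda>i. (f^^i) u) [0..<p]"
  have len: "length us = p" by (simp add: us_def)
  have nth: "i < p \<Longrightarrow> us ! i = (f^^i) u" for i by (simp add: us_def)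
  have "distinct us"
  proof (subst distinct_conv_nth, intro allI impI)
    fix i j assume ij: "i < length us" "j < length us" "i \<noteq> j"
    show "us ! i \<noteq> us ! j"
    proof
      assume eq: "us ! i = us ! j"
      have key: "False" if "a < b" "b < p" "(f^^a) u = (f^^b) u" for a b
      proof -
        have "(f^^(p - b + a)) u = (f^^(p - b)) ((f^^a) u)" by (simp add: funpow_add)
        also have "\<dots> = (f^^(p - b)) ((f^^b) u)" using that by simp
        also have "\<dots> = (f^^(p - b + b)) u" by (simp add: funpow_add)
        also have "p - b + b = p" using that by simp
        finally have "(f^^(p - b + a)) u = u" using p by simp
        moreover have "p - b + a < p" "p - b + a > 0" using that by auto
        ultimately show False using pmin by blast
      qed
      show False
      proof (cases "i < j")
        case True then show False using key[of i j] eq ij len nth by simp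
      next
        case False then have "j < i" using ij by simp
        then show False using key[of j i] eq ij len nth by simp
      qed
    qed
  qed
  moreover have "us \<noteq> []" using p len by auto
  moreover have "\<forall>i. Suc i < length us \<longrightarrow> f (us!i) = us!(Suc i)"
    using len nth by simp
  moreover have "f (last us) = hd us"
  proof -
    have "last us = (f^^(p - 1)) u" using last_conv_nth[of us] len nth p \<open>us \<noteq> []\<close> by simp
    then have "f (last us) = (f^^(Suc (p - 1))) u" by simp
    also have "Suc (p - 1) = p" using p by simp
    finally show ?thesis using p nth[of 0] \<open>us \<noteq> []\<close> by (simp add: hd_conv_nth)
  qed
  moreover have "set us = cycle_verts f C"
  proof
    show "set us \<subseteq> cycle_verts f C"
    proof
      fix w assume "w \<in> set us"
      then obtain i where i: "i < p" "w = (f^^i) u" by (auto simp: us_def)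
      have "u \<in> C" "isper f u" using u by (auto simp: cycle_verts_alt)
      then show "w \<in> cycle_verts f C"
        using i comp_funpow[OF C] isper_funpow by (auto simp: cycle_verts_alt)
    qed
    show "cycle_verts f C \<subseteq> set us"
    proof
      fix w assume "w \<in> cycle_verts f C"
      then obtain i where "w = (f^^i) u" using comp_cycle_orbit[OF C u] by blast
      moreover have "(f^^i) u = (f^^(i mod p)) u" by (rule funpow_mod) (rule p(2))
      ultimately have "w = (f^^(i mod p)) u" by simp
      moreover have "i mod p < p" using p by simp
      ultimately show "w \<in> set us" by (auto simp: us_def)
    qed
  qed
  ultimately show ?thesis by blast
qed

lemma det_Xm_union:
  fixes Z :: "'c \<Rightarrow> 'v::finite set" and a :: "'v \<Rightarrow> 'a::comm_ring_1"
  assumes "finite K" "\<forall>C\<in>K. \<forall>D\<in>K. C \<noteq> D \<longrightarrow> Z C \<inter> Z D = {}" "\<forall>C\<in>K. f ` Z C \<subseteq> Z C"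
  shows "det (Xm f (\<lambda>u. if u \<in> (\<Union>C\<in>K. Z C) then a u else 0))
       = (\<Prod>C\<in>K. det (Xm f (\<lambda>u. if u \<in> Z C then a u else 0)))"
  using assms
proof (induction K rule: finite_induct)
  case empty
  then show ?case by (simp add: Xm_zero)
next
  case (insert C K)
  define b where "b = (\<lambda>u. if u \<in> Z C then a u else 0)"
  define c where "c = (\<lambda>u. if u \<in> (\<Union>C\<in>K. Z C) then a u else 0)"
  have disj: "Z C \<inter> (\<Union>C\<in>K. Z C) = {}" using insert.prems insert.hyps by auto
  have cl: "f ` (\<Union>C\<in>K. Z C) \<subseteq> (\<Union>C\<in>K. Z C)" using insert.prems by blast
  have eq: "(\<lambda>u. if u \<in> (\<Union>C\<in>insert C K. Z C) then a u else 0) = (\<lambda>u. b u + c u)"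
    using disj by (auto simp: b_def c_def fun_eq_iff)
  have "Xm f (\<lambda>u. b u + c u) = Xm f c ** Xm f b"
  proof (rule Xm_mult)
    show "\<forall>j. b j = 0 \<or> c j = 0" using disj by (auto simp: b_def c_def)
    show "\<forall>j. c j \<noteq> 0 \<longrightarrow> b (f j) = 0"
    proof (intro allI impI)
      fix j assume "c j \<noteq> 0"
      then have "j \<in> (\<Union>C\<in>K. Z C)" by (auto simp: c_def split: if_splits)
      then have "f j \<in> (\<Union>C\<in>K. Z C)" using cl by blast
      then show "b (f j) = 0" using disj by (auto simp: b_def)
    qed
  qed
  then have "det (Xm f (\<lambda>u. if u \<in> (\<Union>C\<in>insert C K. Z C) then a u else 0)) = det (Xm f c) * det (Xm f b)"
    unfolding eq by (simp add: det_mul)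
  also have "det (Xm f c) = (\<Prod>C\<in>K. det (Xm f (\<lambda>u. if u \<in> Z C then a u else 0)))"
    unfolding c_def by (rule insert.IH) (use insert.prems in auto)
  finally show ?case using insert.hyps by (simp add: b_def mult.commute)
qed

lemma nonper_acyclic:
  fixes f :: "'v::finite \<Rightarrow> 'v"
  assumes T: "T \<noteq> {}" "\<forall>x\<in>T. \<not> isper f x"
  shows "\<exists>j\<in>T. \<forall>l\<in>T. f l \<noteq> j"
proof (rule ccontr)
  assume "\<not> ?thesis"
  then have "\<forall>x\<in>T. \<exists>l\<in>T. f l = x" by blast
  then obtain g where g: "\<forall>x\<in>T. g x \<in> T \<and> f (g x) = x" by metis
  obtain x0 where x0: "x0 \<in> T" using T by blast
  have gT: "(g^^n) x0 \<in> T" for n by (induction n) (use x0 g in auto)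
  have bk: "(f^^k) ((g^^(m+k)) x0) = (g^^m) x0" for k m
  proof (induction k)
    case 0 then show ?case by simp
  next
    case (Suc k)
    have "(f^^(Suc k)) ((g^^(m + Suc k)) x0) = (f^^k) (f (g ((g^^(m+k)) x0)))"
      by (simp add: funpow_swap1)
    also have "f (g ((g^^(m+k)) x0)) = (g^^(m+k)) x0" using g gT by blast
    finally show ?case using Suc by simp
  qed
  obtain i j where ij: "i < j" "(g^^i) x0 = (g^^j) x0" using funpow_pigeon by blast
  define y where "y = (g^^j) x0"
  have "(f^^(j - i)) y = (g^^i) x0" using bk[of "j - i" i] ij by (simp add: y_def)
  then have "(f^^(j - i)) y = y" using ij y_def by simp
  moreover have "j - i > 0" using ij by simp
  ultimately have "isper f y" unfolding isper_def by blast
  moreover have "y \<in> T" using gT y_def by simp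
  ultimately show False using T by blast
qed

lemma det_Xm_main:
  fixes f :: "'v::finite \<Rightarrow> 'v" and a :: "'v \<Rightarrow> 'a::comm_ring_1"
  shows "det (Xm f a) = (\<Prod>C\<in>vert_components f. 1 - (\<Prod>u\<in>cycle_verts f C. a u))"
proof -
  define aP where "aP = (\<lambda>u. if isper f u then a u else 0)"
  define aN where "aN = (\<lambda>u. if isper f u then 0 else a u)"
  have "a = (\<lambda>u. aN u + aP u)" by (auto simp: aP_def aN_def fun_eq_iff)
  moreover have "Xm f (\<lambda>u. aN u + aP u) = Xm f aP ** Xm f aN"
    by (rule Xm_mult) (auto simp: aP_def aN_def intro: isper_f)
  ultimately have d1: "det (Xm f a) = det (Xm f aP) * det (Xm f aN)" by (simp add: det_mul)
  have d2: "det (Xm f aN) = 1"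
  proof (rule det_Xm_acyclic, intro allI impI)
    fix T assume "T \<noteq> {}" "T \<subseteq> {j. aN j \<noteq> 0}"
    then show "\<exists>j\<in>T. \<forall>l\<in>T. f l \<noteq> j"
      by (intro nonper_acyclic) (auto simp: aN_def split: if_splits)
  qed
  have U: "{u. isper f u} = (\<Union>C\<in>vert_components f. cycle_verts f C)"
  proof
    show "{u. isper f u} \<subseteq> (\<Union>C\<in>vert_components f. cycle_verts f C)"
    proof
      fix u assume u: "u \<in> {u. isper f u}"
      have "vert_rel f `` {u} \<in> vert_components f"
        unfolding vert_components_def by (rule quotientI) simp
      moreover have "u \<in> vert_rel f `` {u}" by (simp add: vert_rel_def)
      ultimately show "u \<in> (\<Union>C\<in>vert_components f. cycle_verts f C)"
        using u by (auto simp: cycle_verts_alt)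
    qed
  qed (auto simp: cycle_verts_alt)
  have "aP = (\<lambda>u. if u \<in> (\<Union>C\<in>vert_components f. cycle_verts f C) then a u else 0)"
    using U by (auto simp: aP_def fun_eq_iff)
  then have d3: "det (Xm f aP) = (\<Prod>C\<in>vert_components f. det (Xm f (\<lambda>u. if u \<in> cycle_verts f C then a u else 0)))"
  proof (simp only:, intro det_Xm_union)
    show "finite (vert_components f)" by simp
    show "\<forall>C\<in>vert_components f. \<forall>D\<in>vert_components f. C \<noteq> D \<longrightarrow> cycle_verts f C \<inter> cycle_verts f D = {}"
      using quotient_disj[OF equiv_vert_rel[of f]] unfolding vert_components_def cycle_verts_alt
      by blast
    show "\<forall>C\<in>vert_components f. f ` cycle_verts f C \<subseteq> cycle_verts f C"
      by (auto simp: cycle_verts_alt intro: comp_f isper_f)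
  qed
  have d4: "det (Xm f (\<lambda>u. if u \<in> cycle_verts f C then a u else 0)) = 1 - (\<Prod>u\<in>cycle_verts f C. a u)"
    if C: "C \<in> vert_components f" for C
  proof -
    obtain us where us: "distinct us" "us \<noteq> []" "\<forall>i. Suc i < length us \<longrightarrow> f (us!i) = us!(Suc i)"
      "f (last us) = hd us" "set us = cycle_verts f C"
      using comp_cycle_list[OF C] by blast
    have "det (Xm f (\<lambda>u. if u \<in> cycle_verts f C then a u else 0))
        = 1 - (\<Prod>u\<in>set us. if u \<in> cycle_verts f C then a u else 0)"
      by (rule det_Xm_cycle) (use us in auto)
    also have "(\<Prod>u\<in>set us. if u \<in> cycle_verts f C then a u else 0) = (\<Prod>u\<in>cycle_verts f C. a u)"
      using us(5) by simp
    finally show ?thesis .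
  qed
  show ?thesis using d1 d2 d3 d4 by simp
qed

lemma bd1_add: "bd1 Es src tgt fv (c + d) = (\<lambda>w. bd1 Es src tgt fv c w + bd1 Es src tgt fv d w)"
  by (simp add: bd1_def fun_eq_iff distrib_right sum.distrib)

lemma bd1_diff: "bd1 Es src tgt fv (c - d) = (\<lambda>w. bd1 Es src tgt fv c w - bd1 Es src tgt fv d w)"
  by (simp add: bd1_def fun_eq_iff left_diff_distrib sum_subtractf)

lemma bd1_vchain:
  fixes fv :: "'v::finite \<Rightarrow> 'v" and Es :: "'e set"
  shows "bd1 Es src tgt fv (vchain u) = (\<lambda>w. of_bool (fv u = w) - of_bool (u = w))"
proof -
  have "bd1 Es src tgt fv (vchain u) w = of_bool (fv u = w) - of_bool (u = w)" for w
  proof -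
    have "bd1 Es src tgt fv (vchain u) w
        = (\<Sum>v\<in>UNIV. if v = u then of_bool (fv v = w) - of_bool (v = w) else 0)"
    proof -
      have s1: "(\<Sum>e\<in>Es. (if (Inl e :: 'e + 'v) = Inr u then 1 else 0) * (of_bool (tgt e = w) - of_bool (src e = w))) = (0::int)"
        by simp
      have s2: "(\<Sum>v\<in>UNIV. (if (Inr v :: 'e + 'v) = Inr u then 1 else 0) * (of_bool (fv v = w) - of_bool (v = w)))
          = (\<Sum>v\<in>UNIV. if v = u then of_bool (fv v = w) - of_bool (v = w) else (0::int))"
        by (rule sum.cong) auto
      show ?thesis unfolding bd1_def vchain_def using s1 s2 by simp
    qed
    also have "\<dots> = of_bool (fv u = w) - of_bool (u = w)" by (simp add: sum.delta')
    finally show ?thesis .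
  qed
  then show ?thesis by (simp add: fun_eq_iff)
qed

lemma cycles1_add:
  "c \<in> cycles1 Es src tgt fv \<Longrightarrow> d \<in> cycles1 Es src tgt fv \<Longrightarrow> c + d \<in> cycles1 Es src tgt fv"
  by (simp add: cycles1_def chain_ok_def bd1_add)

lemma cycles1_zero: "0 \<in> cycles1 Es src tgt fv"
  by (simp add: cycles1_def chain_ok_def bd1_def fun_eq_iff)

lemma q_sum:
  fixes q :: "('e, 'v::finite) chain \<Rightarrow> 'h::ab_group_add" and fv :: "'v \<Rightarrow> 'v"
  assumes add: "\<forall>c\<in>cycles1 Es src tgt fv. \<forall>d\<in>cycles1 Es src tgt fv. q (c + d) = q c + q d"
    and "finite A" and "\<forall>u\<in>A. w u \<in> cycles1 Es src tgt fv"
  shows "(\<Sum>u\<in>A. w u) \<in> cycles1 Es src tgt fv \<and> q (\<Sum>u\<in>A. w u) = (\<Sum>u\<in>A. q (w u))"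
  using assms(2,3)
proof (induction A rule: finite_induct)
  case empty
  have "q (0 + 0) = q 0 + q 0" using add cycles1_zero by blast
  then have "q 0 = 0" by simp
  then show ?case using cycles1_zero unfolding sum.empty by blast
next
  case (insert x A)
  have e1: "sum w (insert x A) = w x + sum w A" by (rule sum.insert[OF insert.hyps])
  have e2: "(\<Sum>u\<in>insert x A. q (w u)) = q (w x) + (\<Sum>u\<in>A. q (w u))" by (rule sum.insert[OF insert.hyps])
  have m: "w x \<in> cycles1 Es src tgt fv" "sum w A \<in> cycles1 Es src tgt fv"
    "q (sum w A) = (\<Sum>u\<in>A. q (w u))" using insert by auto
  show ?case unfolding e1 e2 using m add cycles1_add[OF m(1,2)] by metis
qed

lemma prod_single:
  fixes h :: "'u \<Rightarrow> 'h::ab_group_add"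
  assumes "finite A"
  shows "(\<Prod>u\<in>A. Poly_Mapping.single (h u) (1::int)) = Poly_Mapping.single (\<Sum>u\<in>A. h u) 1"
  using assms by (induction A rule: finite_induct) (simp_all add: mult_single)

theorem lemma4p1:
  fixes Es :: "'e set" and src tgt :: "'e \<Rightarrow> 'v::finite"
    and fv :: "'v \<Rightarrow> 'v" and fe :: "'e \<Rightarrow> ('e \<times> bool) list"
    and q :: "('e, 'v) chain \<Rightarrow> 'h::ab_group_add"
    and v0 :: 'v and b :: "'v \<times> ('e, 'v) chain" and L :: "'v \<Rightarrow> ('e, 'v) chain" and z :: 'h
  assumes "finite Es"
    and "graph_connected Es src tgt"
    and "graph_map Es src tgt fv fe"
    and "is_H_quotient Es src tgt fv fe q"
    and "valid_lift Es src tgt fv v0 b"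
    and "\<forall>v. valid_lift Es src tgt fv v0 (v, L v) \<and> in_comp Es src tgt q b (v, L v)"
    and "\<forall>x. valid_lift Es src tgt fv v0 x \<and> in_comp Es src tgt q b x \<longrightarrow>
            in_comp Es src tgt q b (ftilde Es src tgt fv q z x)"
  shows "assoc_unit
           (det (\<chi> i j. (if i = j then 1 else 0)
                   - Poly_Mapping.single (- z) 1 * Pmat Es src tgt fv q z L $ i $ j))
           (\<Prod>C\<in>vert_components fv. 1 - Poly_Mapping.single (cycle_class fv q C) 1)"
proof -
  note Hq = assms(4)[unfolded is_H_quotient_def]
  have add: "\<forall>c\<in>cycles1 Es src tgt fv. \<forall>d\<in>cycles1 Es src tgt fv. q (c + d) = q c + q d"
    using Hq by blast
  have "z \<in> q ` cycles1 Es src tgt fv" using Hq by auto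
  then have ex: "\<exists>g. g \<in> cycles1 Es src tgt fv \<and> q g = z" by auto
  define g where "g = (SOME g. g \<in> cycles1 Es src tgt fv \<and> q g = z)"
  have g: "g \<in> cycles1 Es src tgt fv" "q g = z" using someI_ex[OF ex] unfolding g_def by auto
  define w where "w u = L u + vchain u - L (fv u)" for u
  have Lok: "chain_ok Es (L v)" for v using assms(6) by (auto simp: valid_lift_def)
  have Lbd: "bd1 Es src tgt fv (L v) = (\<lambda>x. of_bool (x = v) - of_bool (x = v0))" for v
    using assms(6) by (auto simp: valid_lift_def)
  have wc: "w u \<in> cycles1 Es src tgt fv" for u
  proof -
    have "chain_ok Es (w u)" using Lok unfolding chain_ok_def w_def by (simp add: vchain_def)
    moreover have "bd1 Es src tgt fv (w u) = (\<lambda>_. 0)"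
      unfolding w_def bd1_diff bd1_add bd1_vchain Lbd by (auto simp: fun_eq_iff)
    ultimately show ?thesis by (simp add: cycles1_def)
  qed
  have k: "(THE k. deck_rel q k (fv j, L (fv j)) (ftilde Es src tgt fv q z (j, L j))) = z + q (w j)" for j
  proof -
    have ft: "ftilde Es src tgt fv q z (j, L j) = (fv j, L j + g + vchain j)"
      by (simp add: ftilde_def vert_end_def g_def)
    have e: "L j + g + vchain j - L (fv j) = g + w j" unfolding w_def by (simp add: algebra_simps)
    have "q (g + w j) = q g + q (w j)" using add g(1) wc by blast
    then have qq: "q (L j + g + vchain j - L (fv j)) = z + q (w j)" unfolding e using g(2) by simp
    show ?thesis unfolding ft deck_rel_def fst_conv snd_conv qq by simp
  qed
  define a where "a u = Poly_Mapping.single (q (w u)) (1::int)" for u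
  have M: "(\<chi> i j. (if i = j then 1 else 0)
                   - Poly_Mapping.single (- z) 1 * Pmat Es src tgt fv q z L $ i $ j) = transpose (Xm fv a)"
  proof -
    have "(\<chi> i j. (if i = j then 1 else 0)
                   - Poly_Mapping.single (- z) 1 * Pmat Es src tgt fv q z L $ i $ j) $ i $ j
          = transpose (Xm fv a) $ i $ j" for i j
    proof -
      have "Poly_Mapping.single (- z) (1::int) * Pmat Es src tgt fv q z L $ i $ j
          = (if i = fv j then a j else 0)"
        by (simp add: Pmat_def k mult_single a_def)
      then show ?thesis by (simp add: transpose_def Xm_def eq_commute)
    qed
    then show ?thesis by (simp add: vec_eq_iff)
  qed
  have D: "det (\<chi> i j. (if i = j then 1 else 0)
                   - Poly_Mapping.single (- z) 1 * Pmat Es src tgt fv q z L $ i $ j)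
      = (\<Prod>C\<in>vert_components fv. 1 - (\<Prod>u\<in>cycle_verts fv C. a u))"
    unfolding M det_transpose by (rule det_Xm_main)
  have P: "(\<Prod>u\<in>cycle_verts fv C. a u) = Poly_Mapping.single (cycle_class fv q C) 1"
    if C: "C \<in> vert_components fv" for C
  proof -
    define Z where "Z = cycle_verts fv C"
    have fin: "finite Z" by simp
    have "(\<Prod>u\<in>Z. a u) = Poly_Mapping.single (\<Sum>u\<in>Z. q (w u)) 1"
      unfolding a_def by (rule prod_single[OF fin])
    also have "(\<Sum>u\<in>Z. q (w u)) = q (\<Sum>u\<in>Z. w u)"
      using q_sum[OF add fin, of w] wc by simp
    also have "(\<Sum>u\<in>Z. w u) = (\<Sum>u\<in>Z. vchain u)"
    proof -
      have inj: "inj_on fv Z"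
        by (rule inj_onI) (auto simp: Z_def cycle_verts_alt intro: isper_inj)
      have sub: "fv ` Z \<subseteq> Z" using C by (auto simp: Z_def cycle_verts_alt intro: comp_f isper_f)
      have im: "fv ` Z = Z" by (rule endo_inj_surj[OF fin sub inj])
      have r: "(\<Sum>u\<in>Z. L (fv u)) = (\<Sum>u\<in>Z. L u)"
        using sum.reindex[OF inj, of L] im by simp
      have "(\<Sum>u\<in>Z. w u) = (\<Sum>u\<in>Z. L u) + (\<Sum>u\<in>Z. vchain u) - (\<Sum>u\<in>Z. L (fv u))"
        unfolding w_def by (simp only: sum.distrib sum_subtractf)
      then show ?thesis using r by simp
    qed
    finally show ?thesis unfolding Z_def cycle_class_def .
  qed
  have "det (\<chi> i j. (if i = j then 1 else 0)
                   - Poly_Mapping.single (- z) 1 * Pmat Es src tgt fv q z L $ i $ j)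
      = (\<Prod>C\<in>vert_components fv. 1 - Poly_Mapping.single (cycle_class fv q C) 1)"
    unfolding D by (rule prod.cong) (simp_all add: P)
  then show ?thesis unfolding assoc_unit_def
    by (intro exI[of _ 0] exI[of _ 1]) simp
qed

end
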